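(* Let $E$ be a real topological vector space, $\Omega$ a nonempty open subset of $E$, and $f_0,\dots,f_m:\Omega\to\mathbb{R}$. Let $\hat{x}$ be a solution of the problem $(\mathcal{Q}_1)$: minimize $f_0(x)$ subject to $x\in\Omega$ and $f_i(x)\le0$ for all $i\in\{1,\dots,m\}$. Assume that $F=(f_0,f_1,\dots,f_m)$ is $D^+_M$-pseudoconvex at $\hat{x}$ and that $f_j$ is upper semicontinuous at $\hat{x}$ for every $j\in\{1,\dots,m\}$ with $f_j(\hat{x})<0$. Then there exists a nonzero $(\lambda^0,\dots,\lambda^m)\in\mathbb{R}^{m+1}$ such that (a) $\lambda^i\ge0$ for $i=0,\dots,m$; (b) $\lambda^if_i(\hat{x})=0$ for $i=1,\dots,m$; (c) with $f=\sum_{i=0}^m\lambda^if_i$, for every $x\in\Omega$ we have $\lambda^0f_0(\hat{x})=f(\hat{x})\le f(x)$.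
   Context: $D^+f(x)(u):=\limsup_{t\to0^+}\frac{f(x+tu)-f(x)}{t}$ (with $D^+f(x)(0)=0$), $D^+_Mf(x)(u):=\sup_{w\in E}\{D^+f(x)(u+w)-D^+f(x)(w)\}$; $f$ is $D^+_M$-differentiable at $x$ if both are finite for all $u\in E$. A map $F=(f_0,\dots,f_m):\Omega\to\mathbb{R}^{m+1}$ is $D^+_M$-differentiable at $\hat{x}$ if each $f_i$ is, and then $D^+_MF(\hat{x}):=(D^+_Mf_0(\hat{x}),\dots,D^+_Mf_m(\hat{x}))$. $F$ is $D^+_M$-pseudoconvex at $\hat{x}$ if it is $D^+_M$-differentiable at $\hat{x}$ and for every $x\in\Omega$ there exists $\eta=\eta(x,\hat{x})\in E$ such that for all $w\in(\mathbb{R}_+)^{m+1}$: $\langle w,D^+_MF(\hat{x})(\eta)\rangle\ge0\implies\langle w,F(x)-F(\hat{x})\rangle\ge0$. *)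

theory Defs
  imports "HOL-Analysis.Analysis"
begin

definition tvs_ops_continuous :: "'a::{real_vector,topological_space} itself \<Rightarrow> bool" where
  "tvs_ops_continuous _ \<longleftrightarrow>
     continuous_on UNIV (\<lambda>p::'a \<times> 'a. fst p + snd p) \<and>
     continuous_on UNIV (\<lambda>p::real \<times> 'a. fst p *\<^sub>R snd p)"

definition Dplus :: "('a::real_vector \<Rightarrow> real) \<Rightarrow> 'a \<Rightarrow> 'a \<Rightarrow> ereal" where
  "Dplus f x u = (if u = 0 then 0
      else Limsup (at_right (0::real)) (\<lambda>t. ereal ((f (x + t *\<^sub>R u) - f x) / t)))"

definition DplusM :: "('a::real_vector \<Rightarrow> real) \<Rightarrow> 'a \<Rightarrow> 'a \<Rightarrow> ereal" where
  "DplusM f x u = (SUP w. Dplus f x (u + w) - Dplus f x w)"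

definition DplusM_differentiable :: "('a::real_vector \<Rightarrow> real) \<Rightarrow> 'a \<Rightarrow> bool" where
  "DplusM_differentiable f x \<longleftrightarrow>
     (\<forall>u. Dplus f x u \<noteq> \<infinity> \<and> Dplus f x u \<noteq> -\<infinity> \<and>
          DplusM f x u \<noteq> \<infinity> \<and> DplusM f x u \<noteq> -\<infinity>)"

text \<open>F = (f 0, ..., f m) is D^+_M-pseudoconvex at xh on Omega.  The inner product
  with w in (R_+)^(m+1) is written as a finite sum over {0..m}.\<close>
definition DplusM_pseudoconvex ::
    "nat \<Rightarrow> (nat \<Rightarrow> 'a::real_vector \<Rightarrow> real) \<Rightarrow> 'a set \<Rightarrow> 'a \<Rightarrow> bool" where
  "DplusM_pseudoconvex m F \<Omega> xh \<longleftrightarrow>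
     (\<forall>i\<le>m. DplusM_differentiable (F i) xh) \<and>
     (\<forall>x\<in>\<Omega>. \<exists>\<eta>. \<forall>w::nat \<Rightarrow> real. (\<forall>i\<le>m. w i \<ge> 0) \<longrightarrow>
        (\<Sum>i\<le>m. w i * real_of_ereal (DplusM (F i) xh \<eta>)) \<ge> 0 \<longrightarrow>
        (\<Sum>i\<le>m. w i * (F i x - F i xh)) \<ge> 0)"

definition usc_at_within :: "('a::topological_space \<Rightarrow> real) \<Rightarrow> 'a \<Rightarrow> 'a set \<Rightarrow> bool" where
  "usc_at_within f x S \<longleftrightarrow> (\<forall>e>0. \<forall>\<^sub>F y in at x within S. f y < f x + e)"

end

theory Submission
  imports Defs
begin


lemma Dplus_homog:
  fixes f :: "'a::real_vector \<Rightarrow> real"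
  assumes s: "s > 0"
  shows "Dplus f x (s *\<^sub>R u) = ereal s * Dplus f x u"
proof (cases "u = 0")
  case True then show ?thesis by (simp add: Dplus_def)
next
  case False
  let ?q = "\<lambda>t. ereal ((f (x + t *\<^sub>R u) - f x) / t)"
  have su: "s *\<^sub>R u \<noteq> 0" using False s by simp
  have eq: "(\<lambda>t. ereal ((f (x + t *\<^sub>R (s *\<^sub>R u)) - f x) / t)) = (\<lambda>t. ereal s * ?q (s * t))"
  proof
    fix t :: real
    show "ereal ((f (x + t *\<^sub>R (s *\<^sub>R u)) - f x) / t) = ereal s * ?q (s * t)"
      using s by (cases "t = 0") (auto simp: field_simps)
  qed
  have "Limsup (at_right 0) (\<lambda>t. ?q (s * t)) = Limsup (filtermap (times s) (at_right 0)) ?q"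
    by (rule Limsup_filtermap_eq[symmetric]) (use s in \<open>auto simp: inj_def\<close>)
  also have "\<dots> = Limsup (at_right 0) ?q"
    using filtermap_times_pos_at_right[OF s, of 0] by simp
  finally have L: "Limsup (at_right 0) (\<lambda>t. ?q (s * t)) = Limsup (at_right 0) ?q" .
  have "Dplus f x (s *\<^sub>R u) = Limsup (at_right 0) (\<lambda>t. ereal s * ?q (s * t))"
    unfolding Dplus_def using su eq by (simp only: if_False)
  also have "\<dots> = ereal s * Limsup (at_right 0) (\<lambda>t. ?q (s * t))"
    by (rule Limsup_ereal_mult_left) (use s in auto)
  also have "\<dots> = ereal s * Dplus f x u"
    unfolding L Dplus_def using False by simp
  finally show ?thesis .
qed

definition cvx :: "('a::real_vector \<Rightarrow> real) \<Rightarrow> bool" where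
  "cvx g \<longleftrightarrow> (\<forall>x y t. 0 \<le> t \<and> t \<le> 1 \<longrightarrow> g (t *\<^sub>R x + (1 - t) *\<^sub>R y) \<le> t * g x + (1 - t) * g y)"

lemma Dplus_fin:
  assumes "DplusM_differentiable f x"
  shows "Dplus f x u = ereal (real_of_ereal (Dplus f x u))"
    "DplusM f x u = ereal (real_of_ereal (DplusM f x u))"
proof -
  have "Dplus f x u \<noteq> \<infinity>" "Dplus f x u \<noteq> -\<infinity>" "DplusM f x u \<noteq> \<infinity>" "DplusM f x u \<noteq> -\<infinity>"
    using assms unfolding DplusM_differentiable_def by auto
  then show "Dplus f x u = ereal (real_of_ereal (Dplus f x u))"
    "DplusM f x u = ereal (real_of_ereal (DplusM f x u))"
    by (cases "Dplus f x u"; simp; cases "DplusM f x u"; simp)+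
qed

lemma dM_upper:
  assumes "DplusM_differentiable f x"
  shows "real_of_ereal (Dplus f x (u + w)) - real_of_ereal (Dplus f x w) \<le> real_of_ereal (DplusM f x u)"
proof -
  have "Dplus f x (u + w) - Dplus f x w \<le> DplusM f x u"
    unfolding DplusM_def by (rule SUP_upper) simp
  moreover obtain a b c where "Dplus f x (u + w) = ereal a" "Dplus f x w = ereal b" "DplusM f x u = ereal c"
    using Dplus_fin[OF assms] by metis
  ultimately show ?thesis by simp
qed

lemma dM_least:
  assumes "DplusM_differentiable f x"
    and "\<And>w. real_of_ereal (Dplus f x (u + w)) - real_of_ereal (Dplus f x w) \<le> c"
  shows "real_of_ereal (DplusM f x u) \<le> c"
proof -
  have "DplusM f x u \<le> ereal c"
    unfolding DplusM_def
  proof (rule SUP_least)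
    fix w
    obtain a b where "Dplus f x (u + w) = ereal a" "Dplus f x w = ereal b"
      using Dplus_fin[OF assms(1)] by metis
    then show "Dplus f x (u + w) - Dplus f x w \<le> ereal c"
      using assms(2)[of w] by simp
  qed
  moreover obtain a where "DplusM f x u = ereal a"
    using Dplus_fin[OF assms(1)] by metis
  ultimately show ?thesis by simp
qed

lemma d_homog:
  assumes "DplusM_differentiable f x" "s > 0"
  shows "real_of_ereal (Dplus f x (s *\<^sub>R u)) = s * real_of_ereal (Dplus f x u)"
proof -
  have "Dplus f x (s *\<^sub>R u) = ereal s * ereal (real_of_ereal (Dplus f x u))"
    using Dplus_homog[OF assms(2), of f x u] Dplus_fin[OF assms(1), of u] by metis
  then show ?thesis by simp
qed

lemma d_zero: "real_of_ereal (Dplus f x 0) = 0"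
  by (simp add: Dplus_def)

lemma G_homog:
  assumes "DplusM_differentiable f x" "s > 0"
  shows "real_of_ereal (DplusM f x (s *\<^sub>R u)) \<le> s * real_of_ereal (DplusM f x u)"
proof (rule dM_least[OF assms(1)])
  fix w :: 'a
  define v where "v = (1/s) *\<^sub>R w"
  have e1: "s *\<^sub>R u + w = s *\<^sub>R (u + v)" and e2: "w = s *\<^sub>R v"
    using assms(2) by (auto simp: algebra_simps v_def)
  have "real_of_ereal (Dplus f x (s *\<^sub>R u + w)) = s * real_of_ereal (Dplus f x (u + v))"
    unfolding e1 by (rule d_homog[OF assms])
  moreover have "real_of_ereal (Dplus f x w) = s * real_of_ereal (Dplus f x v)"
    by (subst e2) (rule d_homog[OF assms])
  ultimately have "real_of_ereal (Dplus f x (s *\<^sub>R u + w)) - real_of_ereal (Dplus f x w)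
     = s * (real_of_ereal (Dplus f x (u + v)) - real_of_ereal (Dplus f x v))"
    by (simp add: right_diff_distrib)
  also have "\<dots> \<le> s * real_of_ereal (DplusM f x u)"
    using dM_upper[OF assms(1)] assms(2) by (simp add: mult_left_mono)
  finally show "real_of_ereal (Dplus f x (s *\<^sub>R u + w)) - real_of_ereal (Dplus f x w) \<le> s * real_of_ereal (DplusM f x u)" .
qed

lemma G_subadd:
  assumes "DplusM_differentiable f x"
  shows "real_of_ereal (DplusM f x (u + v)) \<le> real_of_ereal (DplusM f x u) + real_of_ereal (DplusM f x v)"
proof (rule dM_least[OF assms(1)])
  fix w
  show "real_of_ereal (Dplus f x (u + v + w)) - real_of_ereal (Dplus f x w) \<le> real_of_ereal (DplusM f x u) + real_of_ereal (DplusM f x v)"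
    using dM_upper[OF assms, of u "v+w"] dM_upper[OF assms, of v w] by (simp add: add.assoc)
qed

lemma G_cvx:
  assumes "DplusM_differentiable f x"
  shows "cvx (\<lambda>u. real_of_ereal (DplusM f x u))"
  unfolding cvx_def
proof (intro allI impI)
  fix y z :: 'a and t :: real
  assume t: "0 \<le> t \<and> t \<le> 1"
  let ?G = "\<lambda>u. real_of_ereal (DplusM f x u)"
  show "?G (t *\<^sub>R y + (1 - t) *\<^sub>R z) \<le> t * ?G y + (1 - t) * ?G z"
  proof (cases "t = 0 \<or> t = 1")
    case True then show ?thesis by auto
  next
    case False
    then have "t > 0" "1 - t > 0" using t by auto
    then show ?thesis using G_subadd[OF assms, of "t *\<^sub>R y" "(1 - t) *\<^sub>R z"]
      G_homog[OF assms, of t y] G_homog[OF assms, of "1-t" z] by linarith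
  qed
qed

lemma d_le_G:
  assumes "DplusM_differentiable f x"
  shows "real_of_ereal (Dplus f x u) \<le> real_of_ereal (DplusM f x u)"
  using dM_upper[OF assms, of u 0] by (simp add: d_zero)



lemma two_case_key:
  fixes a1 a2 b1 b2 :: real
  assumes "a1 < 0" "a2 \<ge> 0" "b1 \<ge> 0" "b2 < 0" "a2 * b1 < a1 * b2"
  shows "\<exists>t. 0 \<le> t \<and> t \<le> 1 \<and> t * a1 + (1 - t) * a2 < 0 \<and> t * b1 + (1 - t) * b2 < 0"
proof -
  define p where "p = a2 / (a2 - a1)"
  define q where "q = - b2 / (b1 - b2)"
  have d1: "a2 - a1 > 0" and d2: "b1 - b2 > 0" using assms by auto
  have "p < q" unfolding p_def q_def using d1 d2 assms(5)
    by (simp add: divide_simps) (simp add: algebra_simps)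
  have p0: "p \<ge> 0" unfolding p_def using d1 assms by simp
  have q1: "q \<le> 1" unfolding q_def using d2 assms by (simp add: divide_simps)
  define t where "t = (p + q) / 2"
  have "p < t" "t < q" using \<open>p < q\<close> unfolding t_def by auto
  have "t * (a2 - a1) > a2" using \<open>p < t\<close> d1 unfolding p_def by (simp add: divide_simps)
  moreover have "t * (b1 - b2) < - b2" using \<open>t < q\<close> d2 unfolding q_def by (simp add: divide_simps)
  ultimately show ?thesis using p0 q1 \<open>p < t\<close> \<open>t < q\<close>
    by (intro exI[of _ t]) (auto simp: algebra_simps)
qed

lemma two_case:
  fixes f g :: "'a::real_vector \<Rightarrow> real"
  assumes cf: "cvx f" and cg: "cvx g" and no: "\<And>y. \<not> (f y < 0 \<and> g y < 0)"
  shows "\<exists>\<alpha>. 0 \<le> \<alpha> \<and> \<alpha> \<le> 1 \<and> (\<forall>y. \<alpha> * f y + (1 - \<alpha>) * g y \<ge> 0)"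
proof (cases "\<forall>y. f y \<ge> 0")
  case True then show ?thesis by (intro exI[of _ 1]) auto
next
  case F1: False
  show ?thesis
  proof (cases "\<forall>y. g y \<ge> 0")
    case True then show ?thesis by (intro exI[of _ 0]) auto
  next
    case G1: False
    have key: "f y2 * g y1 \<ge> f y1 * g y2" if hy: "f y1 < 0" "g y2 < 0" for y1 y2
    proof (rule ccontr)
      assume neg: "\<not> ?thesis"
      have "g y1 \<ge> 0" "f y2 \<ge> 0" using no[of y1] no[of y2] hy by linarith+
      moreover have "f y2 * g y1 < f y1 * g y2" using neg by simp
      ultimately obtain t where t: "0 \<le> t" "t \<le> 1" "t * f y1 + (1 - t) * f y2 < 0" "t * g y1 + (1 - t) * g y2 < 0"
        using two_case_key[of "f y1" "f y2" "g y1" "g y2"] hy by blast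
      have "f (t *\<^sub>R y1 + (1 - t) *\<^sub>R y2) < 0" "g (t *\<^sub>R y1 + (1 - t) *\<^sub>R y2) < 0"
        using cf cg t unfolding cvx_def by (meson le_less_trans)+
      then show False using no by blast
    qed
    define Q where "Q = (\<lambda>y. g y / (- f y)) ` {y. f y < 0}"
    obtain y1 where y1: "f y1 < 0" using F1 by (auto simp: not_le)
    obtain y2 where y2: "g y2 < 0" using G1 by (auto simp: not_le)
    have Qne: "Q \<noteq> {}" using y1 unfolding Q_def by auto
    have Qbdd: "bdd_below Q" unfolding Q_def bdd_below_def
      by (rule exI[of _ 0]) (use no in \<open>auto simp: not_less divide_le_0_iff\<close>, metis not_le)
    define r where "r = Inf Q"
    have f2pos: "f y > 0" if "g y < 0" for y
    proof -
      have "f y \<ge> 0" using no[of y] that by linarith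
      moreover have "f y \<noteq> 0"
      proof
        assume "f y = 0"
        then have "0 \<ge> f y1 * g y" using key[OF y1 that] by simp
        moreover have "f y1 * g y > 0" using y1 that by (simp add: mult_neg_neg)
        ultimately show False by simp
      qed
      ultimately show ?thesis by simp
    qed
    have rge: "r \<ge> - g y / f y" if "g y < 0" for y
      unfolding r_def
    proof (rule cInf_greatest[OF Qne])
      fix z assume "z \<in> Q"
      then obtain y' where y': "f y' < 0" "z = g y' / (- f y')" unfolding Q_def by auto
      have "f y * g y' \<ge> f y' * g y" using key[OF y'(1) that] .
      have zf: "z * f y' = - g y'" using y'(1) unfolding y'(2) by (simp add: divide_simps)
      have "(z * f y) * (- f y') = f y * g y'" proof -
        have "(z * f y) * (- f y') = - (f y * (z * f y'))" by (simp add: algebra_simps)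
        also have "\<dots> = f y * g y'" using zf by simp
        finally show ?thesis .
      qed
      then have "(- g y) * (- f y') \<le> (z * f y) * (- f y')" using \<open>f y * g y' \<ge> f y' * g y\<close> by (simp add: algebra_simps)
      then have "- g y \<le> z * f y" using y'(1) mult_le_cancel_right[of "- g y" "- f y'" "z * f y"] by linarith
      then show "- g y / f y \<le> z" using f2pos[OF that] by (simp add: divide_simps)
    qed
    have rpos: "r > 0"
      using rge[OF y2] f2pos[OF y2] y2 by (smt (verit) divide_pos_pos)
    have rle: "r \<le> g y / (- f y)" if "f y < 0" for y
      unfolding r_def by (rule cInf_lower[OF _ Qbdd]) (use that in \<open>auto simp: Q_def\<close>)
    have main: "r * f y + g y \<ge> 0" for y
    proof -
      consider "f y < 0" | "g y < 0" | "f y \<ge> 0 \<and> g y \<ge> 0" by linarith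
      then show ?thesis
      proof cases
        case 1 then show ?thesis using rle[OF 1] by (simp add: divide_simps)
      next
        case 2 then show ?thesis using rge[OF 2] f2pos[OF 2] by (simp add: divide_simps)
      next
        case 3 then show ?thesis using rpos by simp
      qed
    qed
    show ?thesis
    proof (intro exI[of _ "r / (1 + r)"] conjI allI)
      fix y
      have "1 - r / (1 + r) = 1 / (1 + r)" using rpos by (simp add: field_simps)
      then have "r / (1 + r) * f y + (1 - r / (1 + r)) * g y = (r * f y + g y) / (1 + r)"
        by (simp add: add_divide_distrib)
      then show "0 \<le> r / (1 + r) * f y + (1 - r / (1 + r)) * g y"
        using main rpos by simp
    qed (use rpos in auto)
  qed
qed

lemma cvx_add_scale:
  assumes "cvx f" "cvx g" "c \<ge> 0"
  shows "cvx (\<lambda>y. f y + c * g y)"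
  unfolding cvx_def
proof (intro allI impI)
  fix x y :: 'a and t :: real
  assume t: "0 \<le> t \<and> t \<le> 1"
  have "f (t *\<^sub>R x + (1 - t) *\<^sub>R y) \<le> t * f x + (1 - t) * f y" using assms(1) t unfolding cvx_def by blast
  moreover have "g (t *\<^sub>R x + (1 - t) *\<^sub>R y) \<le> t * g x + (1 - t) * g y" using assms(2) t unfolding cvx_def by blast
  then have "c * g (t *\<^sub>R x + (1 - t) *\<^sub>R y) \<le> c * (t * g x + (1 - t) * g y)" using assms(3) by (rule mult_left_mono)
  ultimately show "f (t *\<^sub>R x + (1 - t) *\<^sub>R y) + c * g (t *\<^sub>R x + (1 - t) *\<^sub>R y)
      \<le> t * (f x + c * g x) + (1 - t) * (f y + c * g y)" by (simp add: algebra_simps)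
qed

lemma cvx_Max:
  fixes g :: "'b \<Rightarrow> 'a::real_vector \<Rightarrow> real"
  assumes "finite B" "B \<noteq> {}" "\<forall>i\<in>B. cvx (g i)"
  shows "cvx (\<lambda>y. Max ((\<lambda>i. g i y) ` B))"
  unfolding cvx_def
proof (intro allI impI)
  fix x y :: 'a and t :: real
  assume t: "0 \<le> t \<and> t \<le> 1"
  let ?z = "t *\<^sub>R x + (1 - t) *\<^sub>R y"
  have "Max ((\<lambda>i. g i ?z) ` B) \<in> (\<lambda>i. g i ?z) ` B" using assms by (intro Max_in) auto
  then obtain i where i: "i \<in> B" "Max ((\<lambda>i. g i ?z) ` B) = g i ?z" by auto
  have "g i ?z \<le> t * g i x + (1 - t) * g i y" using assms(3) i(1) t unfolding cvx_def by blast
  also have "\<dots> \<le> t * Max ((\<lambda>i. g i x) ` B) + (1 - t) * Max ((\<lambda>i. g i y) ` B)"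
    using t i(1) assms(1) by (intro add_mono mult_left_mono) auto
  finally show "Max ((\<lambda>i. g i ?z) ` B) \<le> t * Max ((\<lambda>i. g i x) ` B) + (1 - t) * Max ((\<lambda>i. g i y) ` B)"
    using i(2) by simp
qed

lemma gordan:
  fixes g :: "nat \<Rightarrow> 'a::real_vector \<Rightarrow> real"
  assumes "finite A" "A \<noteq> {}" "\<forall>i\<in>A. cvx (g i)" "\<forall>y. \<exists>i\<in>A. g i y \<ge> 0"
  shows "\<exists>lam. (\<forall>i\<in>A. lam i \<ge> 0) \<and> sum lam A = 1 \<and> (\<forall>y. (\<Sum>i\<in>A. lam i * g i y) \<ge> 0)"
  using assms(1,2,3,4)
proof (induction A arbitrary: g rule: finite_ne_induct)
  case (singleton a)
  then show ?case by (intro exI[of _ "\<lambda>_. 1"]) auto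
next
  case (insert a B)
  define h where "h = (\<lambda>y. Max ((\<lambda>i. g i y) ` B))"
  have ch: "cvx h" unfolding h_def using cvx_Max[of B g] insert by auto
  have hge: "h y \<ge> g i y" if "i \<in> B" for i y unfolding h_def using insert(1) that by auto
  have hin: "\<exists>j\<in>B. h y = g j y" for y
  proof -
    have "h y \<in> (\<lambda>i. g i y) ` B" unfolding h_def using insert(1,2) by (intro Max_in) auto
    then show ?thesis by auto
  qed
  have no: "\<not> (g a y < 0 \<and> h y < 0)" for y
  proof -
    obtain i where "i \<in> insert a B" "g i y \<ge> 0" using insert.prems(2) by blast
    then show ?thesis using hge[of i y] by auto
  qed
  obtain \<alpha> where al: "0 \<le> \<alpha>" "\<alpha> \<le> 1" "\<And>y. \<alpha> * g a y + (1 - \<alpha>) * h y \<ge> 0"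
    using two_case[of "g a" h] insert.prems(1) ch no by auto
  show ?case
  proof (cases "\<alpha> = 1")
    case True
    then have ga: "g a y \<ge> 0" for y using al(3)[of y] by simp
    have s1: "sum (\<lambda>i. if i = a then 1 else 0) (insert a B) = (1::real)"
      using insert(1,3) by (simp add: sum.If_cases)
    have s2: "(\<Sum>i\<in>insert a B. (if i = a then 1 else 0) * g i y) = g a y" for y
    proof -
      have "(\<Sum>i\<in>B. (if i = a then 1 else 0) * g i y) = 0" using insert(3) by (intro sum.neutral) auto
      then show ?thesis using insert(1,3) by simp
    qed
    show ?thesis
      by (rule exI[of _ "\<lambda>i. if i = a then 1 else 0"]) (use s1 s2 ga in auto)
  next
    case False
    then have al1: "\<alpha> < 1" using al by simp
    define c where "c = \<alpha> / (1 - \<alpha>)"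
    have c0: "c \<ge> 0" unfolding c_def using al al1 by simp
    define k where "k = (\<lambda>i y. g i y + c * g a y)"
    have ck: "\<forall>i\<in>B. cvx (k i)" unfolding k_def using insert.prems(1) c0 cvx_add_scale by auto
    have kex: "\<forall>y. \<exists>i\<in>B. k i y \<ge> 0"
    proof
      fix y
      obtain j where j: "j \<in> B" "h y = g j y" using hin by blast
      have "(1 - \<alpha>) * (c * g a y + h y) = \<alpha> * g a y + (1 - \<alpha>) * h y"
        unfolding c_def using al1 by (simp add: field_simps)
      then have "(1 - \<alpha>) * (c * g a y + h y) \<ge> 0" using al(3) by simp
      then have "c * g a y + h y \<ge> 0" using al1 by (simp add: zero_le_mult_iff)
      then show "\<exists>i\<in>B. k i y \<ge> 0" using j unfolding k_def by (intro bexI[of _ j]) auto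
    qed
    obtain \<mu> where mu: "\<forall>i\<in>B. \<mu> i \<ge> 0" "sum \<mu> B = 1" "\<forall>y. (\<Sum>i\<in>B. \<mu> i * k i y) \<ge> 0"
      using insert.IH[OF ck kex] by blast
    define lam where "lam = (\<lambda>i. if i = a then c / (1 + c) else \<mu> i / (1 + c))"
    have sB: "sum lam B = sum \<mu> B / (1 + c)"
    proof -
      have "sum lam B = (\<Sum>i\<in>B. \<mu> i / (1 + c))" unfolding lam_def using insert(3) by (intro sum.cong) auto
      then show ?thesis by (simp add: sum_divide_distrib)
    qed
    have "sum lam (insert a B) = lam a + sum lam B" using insert(1,3) by simp
    also have "\<dots> = 1" unfolding sB mu(2) using c0 by (simp add: lam_def field_simps)
    finally have s1: "sum lam (insert a B) = 1" .
    have s2: "(\<Sum>i\<in>insert a B. lam i * g i y) \<ge> 0" for y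
    proof -
      have eqB: "(\<Sum>i\<in>B. lam i * g i y) = (\<Sum>i\<in>B. \<mu> i * g i y) / (1 + c)"
        unfolding lam_def using insert(3) by (auto simp: sum_divide_distrib intro!: sum.cong)
      have "(\<Sum>i\<in>B. \<mu> i * k i y) = (\<Sum>i\<in>B. \<mu> i * g i y) + (\<Sum>i\<in>B. \<mu> i) * (c * g a y)"
        unfolding k_def by (simp add: algebra_simps sum.distrib sum_distrib_right sum_distrib_left)
      then have ge: "(\<Sum>i\<in>B. \<mu> i * g i y) + c * g a y \<ge> 0" using mu(2) mu(3)[rule_format, of y] by simp
      have "(\<Sum>i\<in>insert a B. lam i * g i y) = lam a * g a y + (\<Sum>i\<in>B. lam i * g i y)"
        using insert(1,3) by simp
      also have "\<dots> = ((\<Sum>i\<in>B. \<mu> i * g i y) + c * g a y) / (1 + c)"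
        unfolding eqB by (simp add: lam_def add_divide_distrib)
      finally show ?thesis using ge c0 by simp
    qed
    show ?thesis
      by (rule exI[of _ lam]) (use s1 s2 mu(1) c0 in \<open>auto simp: lam_def\<close>)
  qed
qed



lemma cont_compose_tendsto:
  assumes "continuous_on UNIV g" "(h \<longlongrightarrow> l) F"
  shows "((\<lambda>x. g (h x)) \<longlongrightarrow> g l) F"
proof (rule topological_tendstoI)
  fix S assume S: "open S" "g l \<in> S"
  have "open (g -` S \<inter> UNIV)" using continuous_on_open_vimage[OF open_UNIV] assms(1) S(1) by blast
  then have "eventually (\<lambda>x. h x \<in> g -` S \<inter> UNIV) F"
    using S(2) by (intro topological_tendstoD[OF assms(2)]) auto
  then show "eventually (\<lambda>x. g (h x) \<in> S) F" by simp
qed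

lemma path_tendsto:
  fixes xh \<eta> :: "'a::{real_vector,topological_space}"
  assumes tvs: "tvs_ops_continuous TYPE('a)"
  shows "((\<lambda>t. xh + t *\<^sub>R \<eta>) \<longlongrightarrow> xh) (at_right 0)"
proof -
  have c1: "continuous_on UNIV (\<lambda>p::'a \<times> 'a. fst p + snd p)"
    and c2: "continuous_on UNIV (\<lambda>p::real \<times> 'a. fst p *\<^sub>R snd p)"
    using tvs unfolding tvs_ops_continuous_def by auto
  have "((\<lambda>t::real. (t, \<eta>)) \<longlongrightarrow> (0, \<eta>)) (at_right 0)"
    by (intro tendsto_Pair tendsto_ident_at tendsto_const)
  from cont_compose_tendsto[OF c2 this]
  have "((\<lambda>t::real. t *\<^sub>R \<eta>) \<longlongrightarrow> 0) (at_right 0)" by simp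
  then have "((\<lambda>t::real. (xh, t *\<^sub>R \<eta>)) \<longlongrightarrow> (xh, 0)) (at_right 0)"
    by (intro tendsto_Pair tendsto_const)
  from cont_compose_tendsto[OF c1 this] show ?thesis by simp
qed

theorem corollary3p9:
  fixes \<Omega> :: "'a::{real_vector,topological_space} set"
    and f :: "nat \<Rightarrow> 'a \<Rightarrow> real" and m :: nat and xh :: 'a
  assumes tvs: "tvs_ops_continuous TYPE('a)"
    and open_\<Omega>: "open \<Omega>" and ne: "\<Omega> \<noteq> {}"
    and feas: "xh \<in> \<Omega>" "\<forall>i\<in>{1..m}. f i xh \<le> 0"
    and opt: "\<forall>x\<in>\<Omega>. (\<forall>i\<in>{1..m}. f i x \<le> 0) \<longrightarrow> f 0 xh \<le> f 0 x"
    and pscvx: "DplusM_pseudoconvex m f \<Omega> xh"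
    and usc: "\<forall>j\<in>{1..m}. f j xh < 0 \<longrightarrow> usc_at_within (f j) xh \<Omega>"
  shows "\<exists>lam::nat \<Rightarrow> real. (\<exists>i\<le>m. lam i \<noteq> 0) \<and>
           (\<forall>i\<le>m. lam i \<ge> 0) \<and>
           (\<forall>i\<in>{1..m}. lam i * f i xh = 0) \<and>
           (\<forall>x\<in>\<Omega>. lam 0 * f 0 xh = (\<Sum>i\<le>m. lam i * f i xh) \<and>
                    (\<Sum>i\<le>m. lam i * f i xh) \<le> (\<Sum>i\<le>m. lam i * f i x))"
proof -
  define A where "A = insert 0 {i\<in>{1..m}. f i xh = 0}"
  have finA: "finite A" and neA: "A \<noteq> {}" and A0: "0 \<in> A" unfolding A_def by auto
  have Asub: "A \<subseteq> {..m}" unfolding A_def by auto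
  have diff: "DplusM_differentiable (f i) xh" if "i \<le> m" for i
    using pscvx that unfolding DplusM_pseudoconvex_def by auto
  define G where "G = (\<lambda>i u. real_of_ereal (DplusM (f i) xh u))"
  have cG: "\<forall>i\<in>A. cvx (G i)" unfolding G_def using Asub diff G_cvx by blast
  have nec: "\<forall>y. \<exists>i\<in>A. G i y \<ge> 0"
  proof (rule ccontr)
    assume "\<not> ?thesis"
    then obtain \<eta> where neg: "\<forall>i\<in>A. G i \<eta> < 0" by (auto simp: not_le)
    define d where "d = (\<lambda>i. real_of_ereal (Dplus (f i) xh \<eta>))"
    have dneg: "d i < 0" if "i \<in> A" for i
      using d_le_G[OF diff, of i \<eta>] neg that Asub unfolding d_def G_def by force
    have Dd: "Dplus (f i) xh \<eta> = ereal (d i)" if "i \<in> A" for i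
      unfolding d_def using Dplus_fin(1)[OF diff, of i] that Asub by auto
    have eta0: "\<eta> \<noteq> 0"
    proof
      assume "\<eta> = 0"
      then have "d 0 = 0" unfolding d_def by (simp add: d_zero)
      then show False using dneg[OF A0] by simp
    qed
    let ?p = "\<lambda>t. xh + t *\<^sub>R \<eta>"
    have ev1: "\<forall>i\<in>A. eventually (\<lambda>t. f i (?p t) < f i xh) (at_right 0)"
    proof
      fix i assume iA: "i \<in> A"
      have "Limsup (at_right 0) (\<lambda>t. ereal ((f i (xh + t *\<^sub>R \<eta>) - f i xh) / t)) < ereal 0"
        using Dd[OF iA] dneg[OF iA] eta0 unfolding Dplus_def by simp
      from Limsup_lessD[OF this]
      have "eventually (\<lambda>t. (f i (xh + t *\<^sub>R \<eta>) - f i xh) / t < 0) (at_right 0)" by simp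
      with eventually_at_right_less[of "0::real"]
      show "eventually (\<lambda>t. f i (?p t) < f i xh) (at_right 0)"
        by eventually_elim (simp add: divide_less_0_iff)
    qed
    have tend: "(?p \<longlongrightarrow> xh) (at_right 0)" using path_tendsto[OF tvs] .
    have evO: "eventually (\<lambda>t. ?p t \<in> \<Omega>) (at_right 0)"
      using topological_tendstoD[OF tend open_\<Omega> feas(1)] .
    have ev2: "\<forall>j\<in>{1..m} - A. eventually (\<lambda>t. f j (?p t) < 0) (at_right 0)"
    proof
      fix j assume j: "j \<in> {1..m} - A"
      then have "f j xh \<noteq> 0" "f j xh \<le> 0" using feas(2) unfolding A_def by auto
      then have fj: "f j xh < 0" by linarith
      then have "usc_at_within (f j) xh \<Omega>" using usc j by auto
      then have "eventually (\<lambda>y. f j y < f j xh + (- f j xh)) (at xh within \<Omega>)"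
        unfolding usc_at_within_def using fj by (meson neg_0_less_iff_less)
      then obtain S where S: "open S" "xh \<in> S" "\<forall>y\<in>S. y \<in> \<Omega> \<longrightarrow> y \<noteq> xh \<longrightarrow> f j y < 0"
        unfolding eventually_at_topological by auto
      have "eventually (\<lambda>t. ?p t \<in> S) (at_right 0)"
        using topological_tendstoD[OF tend S(1,2)] .
      with evO eventually_at_right_less[of "0::real"]
      show "eventually (\<lambda>t. f j (?p t) < 0) (at_right 0)"
        by eventually_elim (use S(3) eta0 in auto)
    qed
    have "eventually (\<lambda>t. (\<forall>i\<in>A. f i (?p t) < f i xh) \<and> (\<forall>j\<in>{1..m} - A. f j (?p t) < 0) \<and> ?p t \<in> \<Omega>) (at_right 0)"
      using eventually_ball_finite[OF finA ev1] eventually_ball_finite[OF _ ev2] evO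
      by (auto intro: eventually_conj)
    then obtain t where t: "\<forall>i\<in>A. f i (?p t) < f i xh" "\<forall>j\<in>{1..m} - A. f j (?p t) < 0" "?p t \<in> \<Omega>"
      using eventually_happens'[OF trivial_limit_at_right_real] by blast
    have "\<forall>i\<in>{1..m}. f i (?p t) \<le> 0"
    proof
      fix i assume i: "i \<in> {1..m}"
      show "f i (?p t) \<le> 0"
      proof (cases "i \<in> A")
        case True
        then have "f i xh = 0" using i unfolding A_def by auto
        then show ?thesis using t(1) True by force
      next
        case False then show ?thesis using t(2) i by force
      qed
    qed
    then have "f 0 xh \<le> f 0 (?p t)" using opt t(3) by blast
    then show False using t(1) A0 by force
  qed
  obtain lam where lam: "\<forall>i\<in>A. lam i \<ge> 0" "sum lam A = 1" "\<forall>y. (\<Sum>i\<in>A. lam i * G i y) \<ge> 0"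
    using gordan[OF finA neA cG nec] by blast
  define L where "L = (\<lambda>i. if i \<in> A then lam i else 0)"
  have conv: "(\<Sum>i\<le>m. L i * h i) = (\<Sum>i\<in>A. lam i * h i)" for h :: "nat \<Rightarrow> real"
    by (rule sum.mono_neutral_cong_right) (use Asub in \<open>auto simp: L_def\<close>)
  have cs: "\<forall>i\<in>{1..m}. L i * f i xh = 0" unfolding L_def A_def by auto
  have nz: "\<exists>i\<le>m. L i \<noteq> 0"
  proof (rule ccontr)
    assume "\<not> ?thesis"
    then have "\<forall>i\<in>A. lam i = 0" using Asub unfolding L_def by force
    then have "sum lam A = 0" by simp
    then show False using lam(2) by simp
  qed
  have val: "(\<Sum>i\<le>m. L i * f i xh) = L 0 * f 0 xh"
  proof -
    have "(\<Sum>i\<le>m. L i * f i xh) = (\<Sum>i\<le>m. if i = 0 then L 0 * f 0 xh else 0)"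
      using cs by (intro sum.cong) auto
    then show ?thesis by simp
  qed
  show ?thesis
  proof (intro exI[of _ L] conjI ballI allI impI)
    show "\<exists>i\<le>m. L i \<noteq> 0" by (rule nz)
  next
    fix i :: nat assume "i \<le> m" then show "L i \<ge> 0" using lam(1) unfolding L_def by auto
  next
    fix i assume "i \<in> {1..m}" then show "L i * f i xh = 0" using cs by auto
  next
    fix x assume "x \<in> \<Omega>"
    show "L 0 * f 0 xh = (\<Sum>i\<le>m. L i * f i xh)" using val by simp
    obtain \<eta> where eta: "\<forall>w::nat \<Rightarrow> real. (\<forall>i\<le>m. w i \<ge> 0) \<longrightarrow>
        (\<Sum>i\<le>m. w i * real_of_ereal (DplusM (f i) xh \<eta>)) \<ge> 0 \<longrightarrow>
        (\<Sum>i\<le>m. w i * (f i x - f i xh)) \<ge> 0"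
      using pscvx \<open>x \<in> \<Omega>\<close> unfolding DplusM_pseudoconvex_def by blast
    have "(\<Sum>i\<le>m. L i * real_of_ereal (DplusM (f i) xh \<eta>)) = (\<Sum>i\<in>A. lam i * G i \<eta>)"
      unfolding G_def by (rule conv)
    then have "(\<Sum>i\<le>m. L i * real_of_ereal (DplusM (f i) xh \<eta>)) \<ge> 0" using lam(3) by simp
    moreover have "\<forall>i\<le>m. L i \<ge> 0" using lam(1) unfolding L_def by auto
    ultimately have "(\<Sum>i\<le>m. L i * (f i x - f i xh)) \<ge> 0" using eta by blast
    then show "(\<Sum>i\<le>m. L i * f i xh) \<le> (\<Sum>i\<le>m. L i * f i x)"
      by (simp add: right_diff_distrib sum_subtractf)
  qed
qed

end
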